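(* (a) Fix an odd positive integer $k$. For a permutation of $[n]$ chosen uniformly among those with all cycle lengths odd, the expected number $\mathbb{E}_o^{(n)}Y_k$ of elements in $k$-cycles satisfies $\mathbb{E}_o^{(n)}Y_k=1+\frac{k+1}{2n}+O(n^{-2})$ as $n\to\infty$ through even values, and $\mathbb{E}_o^{(n)}Y_k=1+\frac{k-1}{2n}+O(n^{-2})$ as $n\to\infty$ through odd values. (b) Fix an even positive integer $k$. For a permutation of $[n]$ chosen uniformly among those with all cycle lengths even, $\mathbb{E}_e^{(n)}Y_k=1+\frac{k}{2n}+O(n^{-2})$ as $n\to\infty$ through even values.
   Context: $\mathbb{E}_o^{(n)}$ (resp. $\mathbb{E}_e^{(n)}$) denotes expectation under the uniform measure on permutations of $[n]$ with all cycle lengths odd (resp. even). $Y_k=kX_k$, where $X_k$ is the number of $k$-cycles, i.e. $Y_k$ is the number of elements lying in $k$-cycles. *)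

theory Defs
  imports "HOL-Analysis.Analysis" "HOL-Combinatorics.Combinatorics"
begin

definition cycle_len :: "(nat \<Rightarrow> nat) \<Rightarrow> nat \<Rightarrow> nat" where
  "cycle_len p x = card (orbit p x)"

definition perms_with :: "(nat \<Rightarrow> bool) \<Rightarrow> nat \<Rightarrow> (nat \<Rightarrow> nat) set" where
  "perms_with P n = {p. p permutes {1..n} \<and> (\<forall>x\<in>{1..n}. P (cycle_len p x))}"

definition Y :: "nat \<Rightarrow> nat \<Rightarrow> (nat \<Rightarrow> nat) \<Rightarrow> nat" where
  "Y n k p = card {x\<in>{1..n}. cycle_len p x = k}"

definition EY :: "(nat \<Rightarrow> bool) \<Rightarrow> nat \<Rightarrow> nat \<Rightarrow> real" where
  "EY P n k = (\<Sum>p\<in>perms_with P n. real (Y n k p)) / real (card (perms_with P n))"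

abbreviation EYo :: "nat \<Rightarrow> nat \<Rightarrow> real" where "EYo \<equiv> EY odd"
abbreviation EYe :: "nat \<Rightarrow> nat \<Rightarrow> real" where "EYe \<equiv> EY even"

end

theory Submission
  imports Defs
begin


definition Aset :: "(nat\<Rightarrow>bool) \<Rightarrow> nat set \<Rightarrow> (nat\<Rightarrow>nat) set" where
  "Aset P S = {p. p permutes S \<and> (\<forall>x\<in>S. P (card (orbit p x)))}"
definition Zset :: "nat \<Rightarrow> nat set \<Rightarrow> (nat\<Rightarrow>nat) set" where
  "Zset x C = {q. q permutes C \<and> orbit q x = C}"

lemma finite_Aset: "finite S \<Longrightarrow> finite (Aset P S)"
  by (rule finite_subset[OF _ finite_permutations[of S]]) (auto simp: Aset_def)

lemma restrict_cyc_permutes: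
  assumes p: "p permutes S" and c: "cyclic_on p C" and sub: "C \<subseteq> S"
  shows "perm_restrict p C permutes C"
proof (rule bij_imp_permutes)
  have "bij_betw p C C"
  proof -
    have "inj_on p C" using permutes_inj_on[OF p] .
    moreover have "p ` C = C"
    proof
      show "p ` C \<subseteq> C" using cyclic_on_inI[OF c] by auto
      show "C \<subseteq> p ` C"
      proof
        fix y assume y: "y \<in> C"
        obtain z where "p z = y" using p by (metis permutes_surj surj_def)
        moreover have "z \<in> C" using cyclic_on_f_in[OF p c] y calculation by auto
        ultimately show "y \<in> p ` C" by auto
      qed
    qed
    ultimately show ?thesis by (simp add: bij_betw_def)
  qed
  then show "bij_betw (perm_restrict p C) C C"
    by (rule bij_betw_cong[THEN iffD1, rotated]) (auto simp: perm_restrict_simps)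
  show "\<And>x. x \<notin> C \<Longrightarrow> perm_restrict p C x = x" by (simp add: perm_restrict_simps)
qed

lemma decomp_bij:
  assumes fin: "finite S" and x: "x \<in> C" and CS: "C \<subseteq> S" and PC: "P (card C)"
  shows "bij_betw (\<lambda>p. (perm_restrict p C, perm_restrict p (S - C)))
           {p\<in>Aset P S. orbit p x = C} (Zset x C \<times> Aset P (S - C))"
proof (rule bij_betw_byWitness[where f' = "\<lambda>(q,r). q \<circ> r"])
  show "\<forall>p\<in>{p\<in>Aset P S. orbit p x = C}. (case (perm_restrict p C, perm_restrict p (S - C)) of (q, r) \<Rightarrow> q \<circ> r) = p"
  proof
    fix p assume "p \<in> {p\<in>Aset P S. orbit p x = C}"
    then have p: "p permutes S" and C: "orbit p x = C" by (auto simp: Aset_def)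
    have c: "cyclic_on p C" using cyclic_on_orbit[OF p fin, of x] C by simp
    have "perm_restrict p C (perm_restrict p (S - C) y) = p y" for y
    proof (cases "y \<in> C")
      case True then show ?thesis by (simp add: perm_restrict_simps)
    next
      case False
      show ?thesis
      proof (cases "y \<in> S")
        case True
        have "p y \<notin> C" using cyclic_on_f_in[OF p c] False by auto
        then show ?thesis using True False by (simp add: perm_restrict_simps)
      next
        case False2: False
        then have "p y = y" using p permutes_not_in by metis
        then show ?thesis using False False2 by (simp add: perm_restrict_simps)
      qed
    qed
    then show "(case (perm_restrict p C, perm_restrict p (S - C)) of (q, r) \<Rightarrow> q \<circ> r) = p"
      by (auto simp: fun_eq_iff)
  qed
  show "\<forall>a'\<in>Zset x C \<times> Aset P (S - C).
       (perm_restrict (case a' of (q, r) \<Rightarrow> q \<circ> r) C, perm_restrict (case a' of (q, r) \<Rightarrow> q \<circ> r) (S - C)) = a'"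
  proof
    fix a' assume "a' \<in> Zset x C \<times> Aset P (S - C)"
    then obtain q r where a': "a' = (q, r)" and q: "q permutes C" and r: "r permutes S - C"
      by (auto simp: Zset_def Aset_def)
    have "perm_restrict (q \<circ> r) C = q"
    proof
      fix y show "perm_restrict (q \<circ> r) C y = q y"
        using r q by (cases "y \<in> C") (auto simp: perm_restrict_simps permutes_not_in)
    qed
    moreover have "perm_restrict (q \<circ> r) (S - C) = r"
    proof
      fix y show "perm_restrict (q \<circ> r) (S - C) y = r y"
      proof (cases "y \<in> S - C")
        case True
        then have "r y \<in> S - C" using permutes_in_image[OF r] by auto
        then show ?thesis using True q by (auto simp: perm_restrict_simps permutes_not_in)
      next
        case False then show ?thesis using r by (simp add: perm_restrict_simps permutes_not_in)
      qed
    qed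
    ultimately show "(perm_restrict (case a' of (q, r) \<Rightarrow> q \<circ> r) C, perm_restrict (case a' of (q, r) \<Rightarrow> q \<circ> r) (S - C)) = a'"
      using a' by simp
  qed
  show "(\<lambda>p. (perm_restrict p C, perm_restrict p (S - C))) ` {p \<in> Aset P S. orbit p x = C} \<subseteq> Zset x C \<times> Aset P (S - C)"
  proof
    fix z assume "z \<in> (\<lambda>p. (perm_restrict p C, perm_restrict p (S - C))) ` {p \<in> Aset P S. orbit p x = C}"
    then obtain p where z: "z = (perm_restrict p C, perm_restrict p (S - C))" and pA: "p \<in> Aset P S"
      and C: "orbit p x = C" by auto
    have p: "p permutes S" using pA by (simp add: Aset_def)
    have c: "cyclic_on p C" using cyclic_on_orbit[OF p fin, of x] C by simp
    have qp: "perm_restrict p C permutes C" using restrict_cyc_permutes[OF p c CS] .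
    have rp: "perm_restrict p (S - C) permutes S - C" using perm_restrict_diff_cyclic[OF p c] .
    have "orbit (perm_restrict p C) x = orbit p x"
      by (rule orbit_cong0[OF x]) (auto simp: perm_restrict_simps cyclic_on_inI[OF c])
    with C qp have "perm_restrict p C \<in> Zset x C" by (simp add: Zset_def)
    moreover have "perm_restrict p (S - C) \<in> Aset P (S - C)"
    proof -
      have "orbit (perm_restrict p (S - C)) y = orbit p y" if y: "y \<in> S - C" for y
        by (rule orbit_cong0[OF y]) (use permutes_in_image[OF rp] in \<open>auto simp: perm_restrict_simps\<close>)
      then show ?thesis using rp pA by (auto simp: Aset_def)
    qed
    ultimately show "z \<in> Zset x C \<times> Aset P (S - C)" using z by simp
  qed
  show "(\<lambda>(q, r). q \<circ> r) ` (Zset x C \<times> Aset P (S - C)) \<subseteq> {p \<in> Aset P S. orbit p x = C}"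
  proof
    fix z assume "z \<in> (\<lambda>(q, r). q \<circ> r) ` (Zset x C \<times> Aset P (S - C))"
    then obtain q r where z: "z = q \<circ> r" and q: "q permutes C" and qo: "orbit q x = C"
      and r: "r permutes S - C" and rA: "\<forall>y\<in>S-C. P (card (orbit r y))"
      by (auto simp: Zset_def Aset_def)
    have zp: "z permutes S" unfolding z
      by (rule permutes_compose[OF permutes_subset[OF r] permutes_subset[OF q CS]]) auto
    have zq: "z y = q y" if "y \<in> C" for y using that r z by (simp add: permutes_not_in)
    have zr: "z y = r y" if "y \<in> S - C" for y
    proof -
      have "r y \<in> S - C" using permutes_in_image[OF r] that by auto
      then show ?thesis using q z by (simp add: permutes_not_in)
    qed
    have cq: "cyclic_on q C" using cyclic_on_singleI[OF x qo[symmetric]] .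
    have oq: "orbit z y = C" if y: "y \<in> C" for y
    proof -
      have "orbit z y = orbit q y"
        by (rule orbit_cong0[OF y]) (use permutes_in_image[OF q] zq in auto)
      then show ?thesis using orbit_cyclic_eq3[OF cq y] by simp
    qed
    have or: "orbit z y = orbit r y" if y: "y \<in> S - C" for y
      by (rule orbit_cong0[OF y]) (use permutes_in_image[OF r] zr in auto)
    have "\<forall>y\<in>S. P (card (orbit z y))"
    proof
      fix y assume "y \<in> S" then show "P (card (orbit z y))"
        using oq or rA PC by (cases "y \<in> C") auto
    qed
    then show "z \<in> {p \<in> Aset P S. orbit p x = C}" using zp oq[OF x] by (simp add: Aset_def)
  qed
qed

lemma decomp_card:
  assumes fin: "finite S" and x: "x \<in> C" and CS: "C \<subseteq> S"
  shows "card {p\<in>Aset P S. orbit p x = C} =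
     (if P (card C) then card (Zset x C) * card (Aset P (S - C)) else 0)"
proof (cases "P (card C)")
  case True
  show ?thesis using bij_betw_same_card[OF decomp_bij[where P=P and x=x and C=C, OF fin x CS True]] True
    by (simp add: card_cartesian_product)
next
  case False
  have "{p\<in>Aset P S. orbit p x = C} = {}" using False x CS by (auto simp: Aset_def)
  then show ?thesis using False by (simp only: if_False card.empty)
qed

lemma orbit_facts:
  assumes p: "p permutes S" and fin: "finite S" and x: "x \<in> S"
  shows "x \<in> orbit p x" "orbit p x \<subseteq> S"
proof -
  have "permutation p" using p fin permutation_permutes by blast
  then show "x \<in> orbit p x" by (rule permutation_self_in_orbit)
  show "orbit p x \<subseteq> S" using permutes_orbit_subset[OF p x] .
qed


lemma partition_card:
  assumes fin: "finite S" and x: "x \<in> S"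
  shows "card {p\<in>Aset P S. Q (orbit p x)} =
    (\<Sum>C\<in>{C. x\<in>C \<and> C\<subseteq>S \<and> Q C}. card {p\<in>Aset P S. orbit p x = C})"
proof -
  have eq: "{p\<in>Aset P S. Q (orbit p x)} = (\<Union>C\<in>{C. x\<in>C \<and> C\<subseteq>S \<and> Q C}. {p\<in>Aset P S. orbit p x = C})"
  proof
    show "{p\<in>Aset P S. Q (orbit p x)} \<subseteq> (\<Union>C\<in>{C. x\<in>C \<and> C\<subseteq>S \<and> Q C}. {p\<in>Aset P S. orbit p x = C})"
    proof
      fix p assume p: "p \<in> {p\<in>Aset P S. Q (orbit p x)}"
      then have "p permutes S" by (simp add: Aset_def)
      with p show "p \<in> (\<Union>C\<in>{C. x\<in>C \<and> C\<subseteq>S \<and> Q C}. {p\<in>Aset P S. orbit p x = C})"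
        using orbit_facts[OF _ fin x, of p] by blast
    qed
  qed blast
  have fI: "finite {C. x\<in>C \<and> C\<subseteq>S \<and> Q C}"
    by (rule finite_subset[of _ "Pow S"]) (use fin in auto)
  show ?thesis unfolding eq
    by (rule card_UN_disjoint[OF fI]) (use finite_Aset[OF fin] in auto)
qed
lemma count_Q:
  assumes fin: "finite S" and x: "x \<in> S"
  shows "card {p\<in>Aset P S. Q (card (orbit p x))} =
    (\<Sum>C\<in>{C. x\<in>C \<and> C\<subseteq>S}. if P (card C) \<and> Q (card C) then card (Zset x C) * card (Aset P (S - C)) else 0)"
proof -
  have fI: "finite {C. x\<in>C \<and> C\<subseteq>S}"
    by (rule finite_subset[of _ "Pow S"]) (use fin in auto)
  have "card {p\<in>Aset P S. Q (card (orbit p x))} =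
    (\<Sum>C\<in>{C. x\<in>C \<and> C\<subseteq>S \<and> Q (card C)}. card {p\<in>Aset P S. orbit p x = C})"
    by (rule partition_card[OF fin x])
  also have "{C. x\<in>C \<and> C\<subseteq>S \<and> Q (card C)} = {C\<in>{C. x\<in>C \<and> C\<subseteq>S}. Q (card C)}" by auto
  also have "(\<Sum>C\<in>{C\<in>{C. x\<in>C \<and> C\<subseteq>S}. Q (card C)}. card {p\<in>Aset P S. orbit p x = C})
     = (\<Sum>C\<in>{C. x\<in>C \<and> C\<subseteq>S}. if Q (card C) then card {p\<in>Aset P S. orbit p x = C} else 0)"
    by (rule sum.inter_filter[OF fI])
  also have "\<dots> = (\<Sum>C\<in>{C. x\<in>C \<and> C\<subseteq>S}. if P (card C) \<and> Q (card C) then card (Zset x C) * card (Aset P (S - C)) else 0)"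
    by (rule sum.cong[OF refl]) (simp add: decomp_card[OF fin])
  finally show ?thesis .
qed

lemma sum_Pow_card:
  assumes fin: "finite T"
  shows "(\<Sum>D\<in>Pow T. h (card D)) = (\<Sum>j\<le>card T. (card T choose j) * (h j :: nat))"
proof -
  have "(\<Sum>D\<in>Pow T. h (card D)) = (\<Sum>j\<le>card T. \<Sum>D\<in>{D. D \<in> Pow T \<and> card D = j}. h (card D))"
  proof (rule sum.group[symmetric])
    show "finite (Pow T)" using fin by simp
    show "finite {..card T}" by simp
    show "card ` Pow T \<subseteq> {..card T}" using fin card_mono by fastforce
  qed
  also have "\<dots> = (\<Sum>j\<le>card T. (card T choose j) * h j)"
  proof (rule sum.cong[OF refl])
    fix j
    have "(\<Sum>D\<in>{D. D \<in> Pow T \<and> card D = j}. h (card D)) = (\<Sum>D\<in>{D. D \<subseteq> T \<and> card D = j}. h j)"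
      by (rule sum.cong) auto
    also have "\<dots> = (card T choose j) * h j" using n_subsets[OF fin, of j] by simp
    finally show "(\<Sum>D\<in>{D. D \<in> Pow T \<and> card D = j}. h (card D)) = (card T choose j) * h j" .
  qed
  finally show ?thesis .
qed

lemma regroup:
  assumes fin: "finite S" and x: "x \<in> S"
  shows "(\<Sum>C\<in>{C. x\<in>C \<and> C\<subseteq>S}. f (card C)) = (\<Sum>j<card S. ((card S - 1) choose j) * (f (Suc j) :: nat))"
proof -
  have im: "{C. x\<in>C \<and> C\<subseteq>S} = insert x ` Pow (S - {x})" 
  proof
    show "{C. x\<in>C \<and> C\<subseteq>S} \<subseteq> insert x ` Pow (S - {x})"
    proof
      fix C assume "C \<in> {C. x\<in>C \<and> C\<subseteq>S}"
      then have "C = insert x (C - {x})" "C - {x} \<in> Pow (S - {x})" by auto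
      then show "C \<in> insert x ` Pow (S - {x})" by blast
    qed
    show "insert x ` Pow (S - {x}) \<subseteq> {C. x\<in>C \<and> C\<subseteq>S}" using x by auto
  qed
  have inj: "inj_on (insert x) (Pow (S - {x}))" unfolding inj_on_def by blast
  have "(\<Sum>C\<in>{C. x\<in>C \<and> C\<subseteq>S}. f (card C)) = (\<Sum>D\<in>Pow (S - {x}). f (card (insert x D)))"
    unfolding im by (subst sum.reindex[OF inj]) simp
  also have "\<dots> = (\<Sum>D\<in>Pow (S - {x}). f (Suc (card D)))"
  proof (rule sum.cong[OF refl])
    fix D assume "D \<in> Pow (S - {x})"
    then have "finite D" "x \<notin> D" using fin finite_subset by auto
    then show "f (card (insert x D)) = f (Suc (card D))" by simp
  qed
  also have "\<dots> = (\<Sum>j\<le>card (S - {x}). (card (S - {x}) choose j) * f (Suc j))"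
    by (rule sum_Pow_card) (use fin in auto)
  also have "card (S - {x}) = card S - 1" using fin x by simp
  also have "{..card S - 1} = {..<card S}"
  proof -
    have "card S > 0" using fin x card_gt_0_iff by blast
    then show ?thesis by auto
  qed
  finally show ?thesis .
qed


lemma Aset_True: "Aset (\<lambda>_. True) S = {p. p permutes S}"
  by (simp add: Aset_def)

lemma sum_fact_binom:
  "(\<Sum>j<Suc m. (m choose j) * (fact j * fact (m - j))) = Suc m * (fact m :: nat)"
proof -
  have "(\<Sum>j<Suc m. (m choose j) * (fact j * fact (m - j))) = (\<Sum>j<Suc m. (fact m :: nat))"
  proof (rule sum.cong[OF refl])
    fix j assume "j \<in> {..<Suc m}"
    then have "j \<le> m" by simp
    from binomial_fact_lemma[OF this] show "(m choose j) * (fact j * fact (m - j)) = (fact m :: nat)"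
      by (simp add: mult_ac)
  qed
  then show ?thesis by simp
qed

lemma Zcard_aux:
  "\<forall>(S::nat set) (x::nat). finite S \<longrightarrow> x \<in> S \<longrightarrow> card S = n \<longrightarrow> card (Zset x S) = fact (n - 1)"
proof (induction n rule: less_induct)
  case (less n)
  show ?case
  proof (intro allI impI)
    fix S :: "nat set" and x :: nat assume fin: "finite S" and x: "x \<in> S" and cS: "card S = n"
    define Cs where "Cs = {C. x\<in>C \<and> C\<subseteq>S}"
    have fCs: "finite Cs" unfolding Cs_def
      by (rule finite_subset[of _ "Pow S"]) (use fin in auto)
    have SCs: "S \<in> Cs" using x by (simp add: Cs_def)
    obtain m where nm: "n = Suc m" using cS x fin by (cases n) auto
    have h1: "fact n = (\<Sum>C\<in>Cs. card (Zset x C) * fact (n - card C))"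
    proof -
      have "fact n = card {p\<in>Aset (\<lambda>_. True) S. (\<lambda>_. True) (card (orbit p x))}"
        using card_permutations[OF cS fin] by (simp add: Aset_True)
      also have "\<dots> = (\<Sum>C\<in>Cs. if True \<and> True then card (Zset x C) * card (Aset (\<lambda>_. True) (S - C)) else 0)"
        unfolding Cs_def by (rule count_Q[OF fin x])
      also have "\<dots> = (\<Sum>C\<in>Cs. card (Zset x C) * fact (n - card C))"
      proof (rule sum.cong[OF refl])
        fix C assume "C \<in> Cs"
        then have "C \<subseteq> S" by (simp add: Cs_def)
        then have "card (S - C) = n - card C" using fin cS by (simp add: card_Diff_subset finite_subset)
        then show "(if True \<and> True then card (Zset x C) * card (Aset (\<lambda>_. True) (S - C)) else 0) =
             card (Zset x C) * fact (n - card C)"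
          using card_permutations[of "S - C" "n - card C"] fin by (simp add: Aset_True)
      qed
      finally show ?thesis .
    qed
    have h2: "(fact n :: nat) = (\<Sum>C\<in>Cs. fact (card C - 1) * fact (n - card C))"
    proof -
      have "(\<Sum>C\<in>Cs. fact (card C - 1) * fact (n - card C)) =
            (\<Sum>j<n. ((n - 1) choose j) * (fact (Suc j - 1) * fact (n - Suc j)))"
        unfolding Cs_def using regroup[OF fin x, of "\<lambda>c. fact (c - 1) * fact (n - c)"] cS by simp
      also have "\<dots> = (\<Sum>j<Suc m. (m choose j) * (fact j * fact (m - j)))" using nm by simp
      also have "\<dots> = fact n" using nm sum_fact_binom by simp
      finally show ?thesis by simp
    qed
    have rest: "(\<Sum>C\<in>Cs - {S}. card (Zset x C) * fact (n - card C)) = (\<Sum>C\<in>Cs - {S}. fact (card C - 1) * fact (n - card C))"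
    proof (rule sum.cong[OF refl])
      fix C assume C: "C \<in> Cs - {S}"
      then have "C \<subset> S" "x \<in> C" by (auto simp: Cs_def)
      then have "card C < n" "finite C" using psubset_card_mono[OF fin] cS finite_subset[OF _ fin] by auto
      then show "card (Zset x C) * fact (n - card C) = fact (card C - 1) * fact (n - card C)"
        using less.IH \<open>x \<in> C\<close> by auto
    qed
    have eA: "(fact n :: nat) = card (Zset x S) * fact (n - card S) + (\<Sum>C\<in>Cs - {S}. card (Zset x C) * fact (n - card C))"
      using h1 sum.remove[OF fCs SCs, of "\<lambda>C. card (Zset x C) * fact (n - card C)"] by simp
    have eB: "(fact n :: nat) = fact (card S - 1) * fact (n - card S) + (\<Sum>C\<in>Cs - {S}. fact (card C - 1) * fact (n - card C))"
      using h2 sum.remove[OF fCs SCs, of "\<lambda>C. fact (card C - 1) * fact (n - card C)"] by simp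
    show "card (Zset x S) = fact (n - 1)" using eA eB rest cS by simp
  qed
qed

lemma Zcard: "finite S \<Longrightarrow> x \<in> S \<Longrightarrow> card (Zset x S) = fact (card S - 1)"
  using Zcard_aux by blast

lemma count_expr:
  assumes fin: "finite S" and x: "x \<in> S"
    and IH: "\<And>T. finite T \<Longrightarrow> card T < card S \<Longrightarrow> card (Aset P T) = g (card T)"
  shows "card {p\<in>Aset P S. Q (card (orbit p x))} =
     (\<Sum>j<card S. ((card S - 1) choose j) * (if P (Suc j) \<and> Q (Suc j) then fact j * g (card S - Suc j) else 0))"
proof -
  have "card {p\<in>Aset P S. Q (card (orbit p x))} =
    (\<Sum>C\<in>{C. x\<in>C \<and> C\<subseteq>S}. if P (card C) \<and> Q (card C) then card (Zset x C) * card (Aset P (S - C)) else 0)"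
    by (rule count_Q[OF fin x])
  also have "\<dots> = (\<Sum>C\<in>{C. x\<in>C \<and> C\<subseteq>S}. if P (card C) \<and> Q (card C) then fact (card C - 1) * g (card S - card C) else 0)"
  proof (rule sum.cong[OF refl])
    fix C assume "C \<in> {C. x\<in>C \<and> C\<subseteq>S}"
    then have C: "x \<in> C" "C \<subseteq> S" by auto
    then have fC: "finite C" using finite_subset[OF _ fin] by auto
    have cd: "card (S - C) = card S - card C" using C fin by (simp add: card_Diff_subset fC)
    have "card C > 0" using C fC card_gt_0_iff by blast
    moreover have "card C \<le> card S" using C fin card_mono by blast
    ultimately have "card (S - C) < card S" using cd by simp
    then have "card (Aset P (S - C)) = g (card S - card C)" using IH[of "S - C"] fin cd by simp
    then show "(if P (card C) \<and> Q (card C) then card (Zset x C) * card (Aset P (S - C)) else 0) =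
      (if P (card C) \<and> Q (card C) then fact (card C - 1) * g (card S - card C) else 0)"
      using Zcard[OF fC C(1)] by simp
  qed
  also have "\<dots> = (\<Sum>j<card S. ((card S - 1) choose j) * (if P (Suc j) \<and> Q (Suc j) then fact (Suc j - 1) * g (card S - Suc j) else 0))"
    by (rule regroup[OF fin x, of "\<lambda>c. if P c \<and> Q c then (fact (c - 1) :: nat) * g (card S - c) else 0"])
  also have "\<dots> = (\<Sum>j<card S. ((card S - 1) choose j) * (if P (Suc j) \<and> Q (Suc j) then fact j * g (card S - Suc j) else 0))"
    by (intro sum.cong refl) simp
  finally show ?thesis .
qed

definition G :: "(nat \<Rightarrow> bool) \<Rightarrow> nat \<Rightarrow> nat" where "G P m = card (Aset P {1..m})"

lemma Gcard_aux: "\<forall>S. finite S \<longrightarrow> card S = n \<longrightarrow> card (Aset P S) = G P n"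
proof (induction n rule: less_induct)
  case (less n)
  show ?case
  proof (intro allI impI)
    fix S :: "nat set" assume fin: "finite S" and cS: "card S = n"
    show "card (Aset P S) = G P n"
    proof (cases "n = 0")
      case True
      then have "S = {}" using fin cS by simp
      then show ?thesis using True by (simp add: G_def)
    next
      case False
      then obtain x where x: "x \<in> S" using cS by fastforce
      have IH: "\<And>T. finite T \<Longrightarrow> card T < card S \<Longrightarrow> card (Aset P T) = G P (card T)"
        using less.IH cS by blast
      have c1: "card {1..n} = n" by simp
      have x1: "(1::nat) \<in> {1..n}" using False by simp
      have IH1: "\<And>T. finite T \<Longrightarrow> card T < card {1..n} \<Longrightarrow> card (Aset P T) = G P (card T)"
        using less.IH by simp
      have "card (Aset P S) = card {p\<in>Aset P S. (\<lambda>_. True) (card (orbit p x))}" by simp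
      also have "\<dots> = (\<Sum>j<card S. ((card S - 1) choose j) * (if P (Suc j) \<and> True then fact j * G P (card S - Suc j) else 0))"
        by (rule count_expr[OF fin x IH])
      also have "\<dots> = (\<Sum>j<card {1..n}. ((card {1..n} - 1) choose j) * (if P (Suc j) \<and> True then fact j * G P (card {1..n} - Suc j) else 0))"
        unfolding c1 cS ..
      also have "\<dots> = card {p\<in>Aset P {1..n}. (\<lambda>_. True) (card (orbit p 1))}"
        by (rule count_expr[OF _ x1 IH1, symmetric]) simp
      also have "\<dots> = G P n" by (simp add: G_def)
      finally show ?thesis .
    qed
  qed
qed

lemma Gcard: "finite S \<Longrightarrow> card (Aset P S) = G P (card S)"
  using Gcard_aux by blast


lemma perms_with_eq: "perms_with P n = Aset P {1..n}"
  by (simp add: perms_with_def Aset_def cycle_len_def)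

lemma G0: "G P 0 = 1"
proof -
  have "Aset P {1..0} = {p. p permutes {}}" by (simp add: Aset_def)
  then show ?thesis using card_permutations[of "{}::nat set" 0] by (simp add: G_def)
qed

lemma G_IH: "\<And>T. finite T \<Longrightarrow> card T < card S \<Longrightarrow> card (Aset P T) = G P (card T)"
  using Gcard by blast

lemma G_rec:
  assumes n: "n \<ge> 1"
  shows "G P n = (\<Sum>j<n. ((n - 1) choose j) * (if P (Suc j) then fact j * G P (n - Suc j) else 0))"
proof -
  have x: "(1::nat) \<in> {1..n}" using n by simp
  have "G P n = card {p\<in>Aset P {1..n}. (\<lambda>_. True) (card (orbit p 1))}" by (simp add: G_def)
  also have "\<dots> = (\<Sum>j<card {1..n}. ((card {1..n} - 1) choose j) * (if P (Suc j) \<and> True then fact j * G P (card {1..n} - Suc j) else 0))"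
    by (rule count_expr[OF _ x G_IH]) simp
  also have "\<dots> = (\<Sum>j<n. ((n - 1) choose j) * (if P (Suc j) then fact j * G P (n - Suc j) else 0))"
    by (simp only: card_atLeastAtMost diff_Suc_1 simp_thms)
  finally show ?thesis .
qed

lemma swap_count:
  assumes "finite A" "finite S"
  shows "(\<Sum>p\<in>A. card {x\<in>S. R p x}) = (\<Sum>x\<in>S. card {p\<in>A. R p x})"
proof -
  have "(\<Sum>p\<in>A. card {x\<in>S. R p x}) = (\<Sum>p\<in>A. \<Sum>x\<in>S. if R p x then 1 else 0)"
    by (rule sum.cong[OF refl]) (simp add: sum.If_cases assms Int_def conj_commute)
  also have "\<dots> = (\<Sum>x\<in>S. \<Sum>p\<in>A. if R p x then 1 else 0)" by (rule sum.swap)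
  also have "\<dots> = (\<Sum>x\<in>S. card {p\<in>A. R p x})"
    by (rule sum.cong[OF refl]) (simp add: sum.If_cases assms Int_def conj_commute)
  finally show ?thesis .
qed

lemma sumY:
  assumes k: "1 \<le> k" "k \<le> n"
  shows "(\<Sum>p\<in>perms_with P n. Y n k p) = n * (if P k then ((n - 1) choose (k - 1)) * fact (k - 1) * G P (n - k) else 0)"
proof -
  have "(\<Sum>p\<in>perms_with P n. Y n k p) = (\<Sum>x\<in>{1..n}. card {p\<in>Aset P {1..n}. card (orbit p x) = k})"
    unfolding perms_with_eq Y_def cycle_len_def
    by (rule swap_count) (auto intro: finite_Aset)
  also have "\<dots> = (\<Sum>x\<in>{1..n}. (if P k then ((n - 1) choose (k - 1)) * fact (k - 1) * G P (n - k) else 0))"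
  proof (rule sum.cong[OF refl])
    fix x assume x: "x \<in> {1..n}"
    have "card {p\<in>Aset P {1..n}. (\<lambda>c. c = k) (card (orbit p x))} = 
      (\<Sum>j<card {1..n}. ((card {1..n} - 1) choose j) * (if P (Suc j) \<and> Suc j = k then fact j * G P (card {1..n} - Suc j) else 0))"
      by (rule count_expr[OF _ x G_IH]) simp
    also have "\<dots> = (\<Sum>j<n. if j = k - 1 then ((n - 1) choose j) * (if P (Suc j) then fact j * G P (n - Suc j) else 0) else 0)"
      by (intro sum.cong refl) (use k in auto)
    also have "\<dots> = (if P k then ((n - 1) choose (k - 1)) * fact (k - 1) * G P (n - k) else 0)"
      using k by (auto simp: sum.delta)
    finally show "card {p\<in>Aset P {1..n}. card (orbit p x) = k} = (if P k then ((n - 1) choose (k - 1)) * fact (k - 1) * G P (n - k) else 0)"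
      by simp
  qed
  also have "\<dots> = n * (if P k then ((n - 1) choose (k - 1)) * fact (k - 1) * G P (n - k) else 0)" by simp
  finally show ?thesis .
qed

definition b :: "(nat \<Rightarrow> bool) \<Rightarrow> nat \<Rightarrow> real" where "b P n = real (G P n) / fact n"

lemma EY_eq:
  assumes k: "1 \<le> k" "k \<le> n" and Pk: "P k"
  shows "EY P n k = b P (n - k) / b P n"
proof -
  have "EY P n k = real (n * (((n - 1) choose (k - 1)) * fact (k - 1) * G P (n - k))) / real (G P n)"
    unfolding EY_def perms_with_eq[symmetric] using sumY[OF k, of P] Pk
    by (simp add: G_def perms_with_eq flip: of_nat_sum)
  also have "real (n * (((n - 1) choose (k - 1)) * fact (k - 1) * G P (n - k))) = fact n / fact (n - k) * real (G P (n - k))"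
  proof -
    have "fact (k - 1) * fact ((n - 1) - (k - 1)) * ((n - 1) choose (k - 1)) = (fact (n - 1) :: nat)"
      by (rule binomial_fact_lemma) (use k in simp)
    moreover have "(n - 1) - (k - 1) = n - k" using k by simp
    ultimately have e: "real (fact (k - 1) * fact (n - k) * ((n - 1) choose (k - 1))) = fact (n - 1)"
      by (metis of_nat_fact)
    have fn: "(fact n :: real) = real n * fact (n - 1)" using k fact_reduce[of n] by simp
    show ?thesis using e unfolding fn by (simp add: field_simps)
  qed
  also have "fact n / fact (n - k) * real (G P (n - k)) / real (G P n) = b P (n - k) / b P n"
    unfolding b_def by (simp add: field_simps)
  finally show ?thesis .
qed

lemma b_rec: "real m * b P m = (\<Sum>j<m. if P (Suc j) then b P (m - Suc j) else 0)"
proof (cases "m = 0")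
  case True then show ?thesis by simp
next
  case False
  then obtain l where ml: "m = Suc l" by (cases m) auto
  have "real (G P m) = real (\<Sum>j<m. (((m - 1) choose j) * (if P (Suc j) then fact j * G P (m - Suc j) else 0)))"
    using G_rec[of m P] False by (simp only: One_nat_def[symmetric])
  also have "\<dots> = (\<Sum>j<m. real (((m - 1) choose j) * (if P (Suc j) then fact j * G P (m - Suc j) else 0)))"
    by (rule of_nat_sum)
  also have "\<dots> = (\<Sum>j<m. fact l * (if P (Suc j) then b P (m - Suc j) else 0))"
  proof (intro sum.cong refl)
    fix j assume "j \<in> {..<m}"
    then have jl: "j \<le> l" using ml by simp
    have e: "real (fact j * fact (l - j) * (l choose j)) = fact l"
      by (metis binomial_fact_lemma[OF jl] of_nat_fact)
    have "(fact (l - j) :: real) \<noteq> 0" by simp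
    then show "real (((m - 1) choose j) * (if P (Suc j) then fact j * G P (m - Suc j) else 0)) =
         fact l * (if P (Suc j) then b P (m - Suc j) else 0)"
      using e unfolding b_def ml by (auto simp: field_simps)
  qed
  also have "\<dots> = fact l * (\<Sum>j<m. if P (Suc j) then b P (m - Suc j) else 0)"
    by (simp add: sum_distrib_left)
  finally have "real (G P m) = fact l * (\<Sum>j<m. if P (Suc j) then b P (m - Suc j) else 0)" .
  moreover have "(fact m :: real) = real m * fact l" using ml by simp
  ultimately show ?thesis unfolding b_def by (simp add: field_simps)
qed




lemma b_rec2:
  assumes per: "\<And>j. P (Suc (Suc j)) = P j" and n: "n \<ge> 2"
  shows "real n * b P n = (if P 1 then b P (n - 1) else 0) + (if P 2 then b P (n - 2) else 0) + real (n - 2) * b P (n - 2)"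
proof -
  obtain l where nl: "n = Suc (Suc l)" using n by (metis add_2_eq_Suc le_Suc_ex)
  have "real n * b P n = (\<Sum>j<Suc (Suc l). if P (Suc j) then b P (n - Suc j) else 0)"
    using b_rec[of n P] nl by simp
  also have "\<dots> = (if P 1 then b P (n - 1) else 0) + ((if P 2 then b P (n - 2) else 0) +
        (\<Sum>j<l. if P (Suc (Suc (Suc j))) then b P (n - Suc (Suc (Suc j))) else 0))"
    by (simp only: sum.lessThan_Suc_shift) (simp add: numeral_2_eq_2)
  also have "(\<Sum>j<l. if P (Suc (Suc (Suc j))) then b P (n - Suc (Suc (Suc j))) else 0)
        = (\<Sum>j<l. if P (Suc j) then b P (l - Suc j) else 0)"
    by (intro sum.cong refl) (simp add: per nl)
  also have "\<dots> = real l * b P l" using b_rec[of l P] by simp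
  finally show ?thesis using nl by simp
qed

lemma b0: "b P 0 = 1" by (simp add: b_def G0)

lemma b1: "b P 1 = (if P 1 then 1 else 0)"
  using b_rec[of 1 P] by (simp add: b0)

lemma b1': "b P (Suc 0) = (if P 1 then 1 else 0)"
  using b1 by simp

definition c :: "nat \<Rightarrow> real" where "c m = (\<Prod>i<m. (2 * real i + 1) / (2 * real i + 2))"

lemma c0: "c 0 = 1" by (simp add: c_def)
lemma cSuc: "c (Suc m) = c m * ((2 * real m + 1) / (2 * real m + 2))"
  by (simp add: c_def)
lemma c_pos: "c m > 0"
  unfolding c_def by (rule prod_pos) (auto simp: field_simps)

lemma per_odd: "odd (Suc (Suc j)) = odd (j::nat)" by simp
lemma per_even: "even (Suc (Suc j)) = even (j::nat)" by simp

lemma b_odd: "b odd (2 * m) = c m \<and> b odd (2 * m + 1) = c m"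
proof (induction m)
  case 0 then show ?case by (simp add: b0 b1' c0)
next
  case (Suc m)
  have e1: "real (2 * m + 2) * b odd (2 * m + 2) = b odd (2 * m + 1) + real (2 * m) * b odd (2 * m)"
    using b_rec2[where P=odd, OF per_odd, of "2 * m + 2"] by simp
  have A: "b odd (2 * Suc m) = c (Suc m)"
  proof -
    have "real (2 * m + 2) * b odd (2 * m + 2) = (2 * real m + 1) * c m" using e1 Suc.IH by (simp add: algebra_simps)
    then have "b odd (2 * m + 2) = c m * ((2 * real m + 1) / (2 * real m + 2))"
      by (simp add: field_simps)
    then show ?thesis by (simp add: cSuc)
  qed
  have e2: "real (2 * m + 3) * b odd (2 * m + 3) = b odd (2 * m + 2) + real (2 * m + 1) * b odd (2 * m + 1)"
    using b_rec2[where P=odd, OF per_odd, of "2 * m + 3"] by (simp add: numeral_3_eq_3)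
  have B: "b odd (2 * Suc m + 1) = c (Suc m)"
  proof -
    have "real (2 * m + 3) * b odd (2 * m + 3) = c (Suc m) + (2 * real m + 1) * c m"
      using e2 Suc.IH A by simp
    also have "(2 * real m + 1) * c m = (2 * real m + 2) * c (Suc m)" by (simp add: cSuc field_simps)
    finally have "real (2 * m + 3) * b odd (2 * m + 3) = real (2 * m + 3) * c (Suc m)" by (simp add: algebra_simps)
    then show ?thesis by (simp add: numeral_3_eq_3)
  qed
  show ?case using A B by simp
qed

lemma b_even: "b even (2 * m) = c m \<and> b even (2 * m + 1) = 0"
proof (induction m)
  case 0 then show ?case by (simp add: b0 b1' c0)
next
  case (Suc m)
  have e1: "real (2 * m + 2) * b even (2 * m + 2) = b even (2 * m) + real (2 * m) * b even (2 * m)"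
    using b_rec2[where P=even, OF per_even, of "2 * m + 2"] by simp
  have A: "b even (2 * Suc m) = c (Suc m)"
  proof -
    have "real (2 * m + 2) * b even (2 * m + 2) = (2 * real m + 1) * c m" using e1 Suc.IH by (simp add: algebra_simps)
    then have "b even (2 * m + 2) = c m * ((2 * real m + 1) / (2 * real m + 2))"
      by (simp add: field_simps)
    then show ?thesis by (simp add: cSuc)
  qed
  have e2: "real (2 * m + 3) * b even (2 * m + 3) = b even (2 * m + 1) + real (2 * m + 1) * b even (2 * m + 1)"
    using b_rec2[where P=even, OF per_even, of "2 * m + 3"] by (simp add: numeral_3_eq_3)
  have B: "b even (2 * Suc m + 1) = 0"
    using e2 Suc.IH by (simp add: numeral_3_eq_3)
  show ?case using A B by simp
qed

lemma c_ratio: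
  assumes "r \<le> m"
  shows "c (m - r) / c m = (\<Prod>i\<in>{m-r..<m}. 1 + 1 / (2 * real i + 1))"
proof -
  let ?f = "\<lambda>i::nat. (2 * real i + 1) / (2 * real i + 2)"
  have "c m = (\<Prod>i\<in>{0..<m-r}. ?f i) * (\<Prod>i\<in>{m-r..<m}. ?f i)"
    unfolding c_def atLeast0LessThan[symmetric] using assms by (simp add: prod.atLeastLessThan_concat)
  then have cm: "c m = c (m - r) * (\<Prod>i\<in>{m-r..<m}. ?f i)"
    by (simp add: c_def atLeast0LessThan)
  have "(\<Prod>i\<in>{m-r..<m}. 1 + 1 / (2 * real i + 1)) * (\<Prod>i\<in>{m-r..<m}. ?f i) = (\<Prod>i\<in>{m-r..<m}. (1::real))"
    unfolding prod.distrib[symmetric]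
  proof (intro prod.cong refl)
    fix i :: nat
    have A: "(1 + 1 / A) * (A / (A + 1)) = 1" if "A > 0" for A :: real
    proof -
      have h: "A + 1 \<noteq> 0" "A \<noteq> 0" using that by auto
      then have "1 + 1 / A = (A + 1) / A" by (simp add: field_simps)
      then show ?thesis using h by simp
    qed
    have "2 * real i + 2 = (2 * real i + 1) + 1" by simp
    then show "(1 + 1 / (2 * real i + 1)) * ?f i = 1" using A[of "2 * real i + 1"] by simp
  qed
  then have "(\<Prod>i\<in>{m-r..<m}. 1 + 1 / (2 * real i + 1)) * (\<Prod>i\<in>{m-r..<m}. ?f i) = 1" by simp
  then show ?thesis using cm c_pos[of "m - r"] by (simp add: field_simps)
qed




lemma pow_upper:
  fixes a :: real
  assumes a: "a \<ge> 0" and ra: "real r * a \<le> 1"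
  shows "(1 + a) ^ r \<le> 1 + real r * a + (real r)^2 * a^2"
  using ra
proof (induction r)
  case 0 then show ?case by simp
next
  case (Suc r)
  have ra1: "real r * a \<le> 1" using Suc.prems a by (simp add: algebra_simps)
  have IH: "(1 + a) ^ r \<le> 1 + real r * a + (real r)^2 * a^2" using Suc.IH[OF ra1] .
  have "(1 + a) ^ Suc r = (1 + a) * (1 + a) ^ r" by simp
  also have "\<dots> \<le> (1 + a) * (1 + real r * a + (real r)^2 * a^2)"
    by (rule mult_left_mono[OF IH]) (use a in simp)
  also have "\<dots> = 1 + real (Suc r) * a + (real (Suc r))^2 * a^2 - (real r * a * a + a * a - (real r * a) * (real r * a * a))"
    by (simp add: algebra_simps power2_eq_square)
  also have "\<dots> \<le> 1 + real (Suc r) * a + (real (Suc r))^2 * a^2"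
  proof -
    have "(real r * a) * (real r * a * a) \<le> 1 * (real r * a * a)"
      by (rule mult_right_mono[OF ra1]) (use a in simp)
    moreover have "a * a \<ge> 0" by simp
    ultimately show ?thesis by linarith
  qed
  finally show ?case .
qed

lemma ratio_bound:
  assumes m1: "1 \<le> m" and r2: "2 * r \<le> m"
  shows "\<bar>c (m - r) / c m - (1 + real r / (2 * real m))\<bar> \<le> 2 * (real r)^2 / (real m)^2"
proof -
  define M where "M = real m"
  define \<rho> where "\<rho> = real r"
  have M1: "M \<ge> 1" using m1 by (simp add: M_def)
  have rM: "2 * \<rho> \<le> M" using r2 by (simp add: M_def \<rho>_def)
  have r0: "\<rho> \<ge> 0" by (simp add: \<rho>_def)
  define a where "a = 1 / (2 * M)"
  define a' where "a' = 1 / (2 * M) + \<rho> / M^2"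
  let ?I = "{m - r..<m}"
  have cI: "card ?I = r" using r2 by simp
  have R: "c (m - r) / c m = (\<Prod>i\<in>?I. 1 + 1 / (2 * real i + 1))"
    by (rule c_ratio) (use r2 in simp)
  have lowf: "1 / (2 * M) \<le> 1 / (2 * real i + 1)" if i: "i \<in> ?I" for i
  proof -
    have "real i + 1 \<le> M" using i by (simp add: M_def of_nat_less_iff[symmetric] del: of_nat_less_iff)
    then have "2 * real i + 1 \<le> 2 * M" by simp
    then show ?thesis by (intro divide_left_mono) auto
  qed
  have upf: "1 / (2 * real i + 1) \<le> a'" if i: "i \<in> ?I" for i
  proof -
    have "real i \<ge> M - \<rho>" using i r2 by (auto simp: M_def \<rho>_def)
    then have h1: "2 * (M - \<rho>) \<le> 2 * real i + 1" by simp
    have pos: "M - \<rho> > 0" using rM M1 r0 by linarith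
    have "1 / (2 * real i + 1) \<le> 1 / (2 * (M - \<rho>))"
      by (rule divide_left_mono[OF h1]) (use pos in auto)
    also have "1 / (2 * (M - \<rho>)) \<le> a'"
    proof -
      have k: "\<rho> * (M - 2 * \<rho>) \<ge> 0" using r0 rM by simp
      have "M^2 \<le> M * (M - \<rho>) + 2 * \<rho> * (M - \<rho>)"
        using k by (simp add: algebra_simps power2_eq_square)
      then have "M^2 / (2 * M^2 * (M - \<rho>)) \<le> (M * (M - \<rho>) + 2 * \<rho> * (M - \<rho>)) / (2 * M^2 * (M - \<rho>))"
        by (intro divide_right_mono) (use pos M1 in auto)
      moreover have "M^2 / (2 * M^2 * (M - \<rho>)) = 1 / (2 * (M - \<rho>))" using M1 pos by (simp add: field_simps power2_eq_square)
      moreover have "(M * (M - \<rho>) + 2 * \<rho> * (M - \<rho>)) / (2 * M^2 * (M - \<rho>)) = a'"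
        unfolding a'_def using M1 pos by (simp add: field_simps power2_eq_square)
      ultimately show ?thesis by simp
    qed
    finally show ?thesis .
  qed
  have a0: "a \<ge> 0" using M1 by (simp add: a_def)
  have a'0: "a' \<ge> 0" using M1 r0 by (simp add: a'_def)
  have a'M: "a' \<le> 1 / M"
  proof -
    have "\<rho> / M^2 \<le> 1 / (2 * M)"
    proof -
      have "\<rho> / M^2 = \<rho> / M * (1 / M)" by (simp add: power2_eq_square)
      also have "\<rho> / M \<le> 1 / 2" using rM M1 by (simp add: field_simps)
      then have "\<rho> / M * (1 / M) \<le> 1 / 2 * (1 / M)" by (rule mult_right_mono) (use M1 in simp)
      finally show ?thesis by simp
    qed
    then show ?thesis unfolding a'_def by simp
  qed
  have lower: "(1 + a) ^ r \<le> c (m - r) / c m"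
  proof -
    have "(1 + a) ^ r = (\<Prod>i\<in>?I. 1 + a)" using cI by simp
    also have "\<dots> \<le> (\<Prod>i\<in>?I. 1 + 1 / (2 * real i + 1))"
      by (rule prod_mono) (use lowf a0 in \<open>auto simp: a_def\<close>)
    finally show ?thesis using R by simp
  qed
  have upper: "c (m - r) / c m \<le> (1 + a') ^ r"
  proof -
    have "(\<Prod>i\<in>?I. 1 + 1 / (2 * real i + 1)) \<le> (\<Prod>i\<in>?I. 1 + a')"
      by (rule prod_mono) (use upf in \<open>auto intro: add_nonneg_nonneg\<close>)
    also have "\<dots> = (1 + a') ^ r" using cI by simp
    finally show ?thesis using R by simp
  qed
  have B: "1 + \<rho> * a \<le> (1 + a) ^ r"
    using Bernoulli_inequality[of a r] a0 by (simp add: \<rho>_def)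
  have ra': "\<rho> * a' \<le> 1"
  proof -
    have "\<rho> * a' \<le> \<rho> * (1 / M)" by (rule mult_left_mono[OF a'M r0])
    also have "\<dots> \<le> 1" using rM M1 r0 by (simp add: field_simps)
    finally show ?thesis .
  qed
  have U: "(1 + a') ^ r \<le> 1 + \<rho> * a' + \<rho>^2 * a'^2"
    using pow_upper[OF a'0, of r] ra' by (simp add: \<rho>_def)
  have sq: "a'^2 \<le> (1 / M)^2" by (rule power_mono[OF a'M a'0])
  have "\<rho>^2 * a'^2 \<le> \<rho>^2 * (1/M)^2" by (rule mult_left_mono[OF sq]) simp
  then have U2: "c (m - r) / c m \<le> 1 + \<rho> / (2 * M) + 2 * \<rho>^2 / M^2"
  proof -
    have e: "\<rho> * a' = \<rho> / (2 * M) + \<rho>^2 / M^2" unfolding a'_def by (simp add: algebra_simps power2_eq_square)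
    have e2: "\<rho>^2 * (1 / M)^2 = \<rho>^2 / M^2" by (simp add: power_divide)
    have e3: "2 * \<rho>^2 / M^2 = \<rho>^2 / M^2 + \<rho>^2 / M^2" by simp
    show ?thesis using upper U e e2 e3 \<open>\<rho>^2 * a'^2 \<le> \<rho>^2 * (1/M)^2\<close> by linarith
  qed
  have L2: "1 + \<rho> / (2 * M) \<le> c (m - r) / c m" using B lower unfolding a_def by simp
  have "\<bar>c (m - r) / c m - (1 + \<rho> / (2 * M))\<bar> \<le> 2 * \<rho>^2 / M^2"
    using U2 L2 by (simp add: abs_le_iff)
  then show ?thesis by (simp add: M_def \<rho>_def)
qed




lemma caseA:
  assumes mr: "2 * (j + 1) \<le> m" and m1: "1 \<le> m"
  shows "\<bar>EYo (2*m) (2*j+1) - (1 + (real (2*j+1) + 1) / (2 * real (2*m)))\<bar> \<le> 8 * (real (j+1))^2 / (real (2*m))^2"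
proof -
  have "EYo (2*m) (2*j+1) = b odd (2*m - (2*j+1)) / b odd (2*m)"
    by (rule EY_eq) (use mr in auto)
  also have "2*m - (2*j+1) = 2 * (m - (j+1)) + 1" using mr by simp
  finally have E: "EYo (2*m) (2*j+1) = c (m - (j+1)) / c m" using b_odd by simp
  have t: "(real (2*j+1) + 1) / (2 * real (2*m)) = real (j+1) / (2 * real m)" using m1 by (simp add: field_simps)
  have bd: "8 * (real (j+1))^2 / (real (2*m))^2 = 2 * (real (j+1))^2 / (real m)^2" by (simp add: power_mult_distrib)
  show ?thesis unfolding E t bd by (rule ratio_bound[OF m1 mr])
qed

lemma caseB:
  assumes mr: "2 * j \<le> m" and m1: "1 \<le> m"
  shows "\<bar>EYo (2*m+1) (2*j+1) - (1 + (real (2*j+1) - 1) / (2 * real (2*m+1)))\<bar> \<le> 9 * (2 * (real j)^2 + real j) / (real (2*m+1))^2"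
proof -
  have "EYo (2*m+1) (2*j+1) = b odd (2*m+1 - (2*j+1)) / b odd (2*m+1)"
    by (rule EY_eq) (use mr in auto)
  also have "2*m+1 - (2*j+1) = 2 * (m - j)" using mr by simp
  finally have E: "EYo (2*m+1) (2*j+1) = c (m - j) / c m" using b_odd by simp
  define M where "M = real m"
  define J where "J = real j"
  have M1: "M \<ge> 1" using m1 by (simp add: M_def)
  have J0: "J \<ge> 0" by (simp add: J_def)
  have R: "\<bar>c (m - j) / c m - (1 + J / (2 * M))\<bar> \<le> 2 * J^2 / M^2"
    using ratio_bound[OF m1 mr] by (simp add: M_def J_def)
  have t: "(real (2*j+1) - 1) / (2 * real (2*m+1)) = J / (2 * M + 1)" by (simp add: M_def J_def field_simps)
  have d: "J / (2 * M) - J / (2 * M + 1) = J / (2 * M * (2 * M + 1))" using M1 by (simp add: field_simps)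
  have d0: "J / (2 * M * (2 * M + 1)) \<ge> 0" using M1 J0 by simp
  have d1: "J / (2 * M * (2 * M + 1)) \<le> J / M^2"
  proof (rule divide_left_mono[OF _ J0])
    show "M^2 \<le> 2 * M * (2 * M + 1)" using M1 by (simp add: power2_eq_square algebra_simps)
    show "0 < 2 * M * (2 * M + 1) * M^2" using M1 by simp
  qed
  have tot: "\<bar>c (m - j) / c m - (1 + J / (2 * M + 1))\<bar> \<le> (2 * J^2 + J) / M^2"
  proof -
    have "(2 * J^2 + J) / M^2 = 2 * J^2 / M^2 + J / M^2" by (simp add: add_divide_distrib)
    then show ?thesis using R d d0 d1 by (simp add: abs_le_iff)
  qed
  have n3: "2 * M + 1 \<le> 3 * M" using M1 by simp
  have "(2 * J^2 + J) / M^2 \<le> 9 * (2 * J^2 + J) / (2 * M + 1)^2"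
  proof -
    have "(2 * M + 1)^2 \<le> (3 * M)^2" by (rule power_mono[OF n3]) (use M1 in simp)
    then have "(2 * M + 1)^2 \<le> 9 * M^2" by (simp add: power_mult_distrib)
    moreover have "0 \<le> 2 * J^2 + J" using J0 by simp
    ultimately have "(2 * J^2 + J) / M^2 \<le> (2 * J^2 + J) / ((2 * M + 1)^2 / 9)"
      by (intro divide_left_mono) (use M1 in auto)
    then show ?thesis by (simp add: mult.commute)
  qed
  with tot have "\<bar>c (m - j) / c m - (1 + J / (2 * M + 1))\<bar> \<le> 9 * (2 * J^2 + J) / (2 * M + 1)^2" by linarith
  then show ?thesis unfolding E t by (simp add: M_def J_def add.commute)
qed

lemma caseC:
  assumes mr: "2 * j \<le> m" and m1: "1 \<le> m" and j1: "1 \<le> j"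
  shows "\<bar>EYe (2*m) (2*j) - (1 + real (2*j) / (2 * real (2*m)))\<bar> \<le> 8 * (real j)^2 / (real (2*m))^2"
proof -
  have "EYe (2*m) (2*j) = b even (2*m - (2*j)) / b even (2*m)"
    by (rule EY_eq) (use mr j1 in auto)
  also have "2*m - 2*j = 2 * (m - j)" using mr by simp
  finally have E: "EYe (2*m) (2*j) = c (m - j) / c m" using b_even by simp
  have t: "real (2*j) / (2 * real (2*m)) = real j / (2 * real m)" using m1 by (simp add: field_simps)
  have bd: "8 * (real j)^2 / (real (2*m))^2 = 2 * (real j)^2 / (real m)^2" by (simp add: power_mult_distrib)
  show ?thesis unfolding E t bd by (rule ratio_bound[OF m1 mr])
qed

theorem proposition3p3:
  shows "(\<forall>k::nat. odd k \<longrightarrow>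
            (\<exists>C N. \<forall>n\<ge>N. even n \<longrightarrow>
               \<bar>EYo n k - (1 + (real k + 1) / (2 * real n))\<bar> \<le> C / (real n)^2) \<and>
            (\<exists>C N. \<forall>n\<ge>N. odd n \<longrightarrow>
               \<bar>EYo n k - (1 + (real k - 1) / (2 * real n))\<bar> \<le> C / (real n)^2))
       \<and> (\<forall>k::nat. even k \<and> k > 0 \<longrightarrow>
            (\<exists>C N. \<forall>n\<ge>N. even n \<longrightarrow>
               \<bar>EYe n k - (1 + real k / (2 * real n))\<bar> \<le> C / (real n)^2))"
proof (intro conjI allI impI)
  fix k :: nat assume "odd k"
  then obtain j where k: "k = 2*j+1" using oddE by blast
  show "\<exists>C N. \<forall>n\<ge>N. even n \<longrightarrow> \<bar>EYo n k - (1 + (real k + 1) / (2 * real n))\<bar> \<le> C / (real n)^2"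
  proof (intro exI allI impI)
    fix n :: nat assume n: "4 * j + 6 \<le> n" "even n"
    then obtain m where nm: "n = 2*m" by blast
    show "\<bar>EYo n k - (1 + (real k + 1) / (2 * real n))\<bar> \<le> 8 * (real (j+1))^2 / (real n)^2"
      unfolding k nm by (rule caseA) (use n nm in auto)
  qed
  show "\<exists>C N. \<forall>n\<ge>N. odd n \<longrightarrow> \<bar>EYo n k - (1 + (real k - 1) / (2 * real n))\<bar> \<le> C / (real n)^2"
  proof (intro exI allI impI)
    fix n :: nat assume n: "4 * j + 3 \<le> n" "odd n"
    then obtain m where nm: "n = 2*m+1" using oddE by blast
    show "\<bar>EYo n k - (1 + (real k - 1) / (2 * real n))\<bar> \<le> 9 * (2 * (real j)^2 + real j) / (real n)^2"
      unfolding k nm by (rule caseB) (use n nm in auto)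
  qed
next
  fix k :: nat assume "even k \<and> k > 0"
  then obtain j where k: "k = 2*j" and j1: "1 \<le> j" by (metis evenE gr0_conv_Suc le_add1 mult_0_right not_gr0 plus_1_eq_Suc Suc_leI)
  show "\<exists>C N. \<forall>n\<ge>N. even n \<longrightarrow> \<bar>EYe n k - (1 + real k / (2 * real n))\<bar> \<le> C / (real n)^2"
  proof (intro exI allI impI)
    fix n :: nat assume n: "4 * j + 2 \<le> n" "even n"
    then obtain m where nm: "n = 2*m" by blast
    show "\<bar>EYe n k - (1 + real k / (2 * real n))\<bar> \<le> 8 * (real j)^2 / (real n)^2"
      unfolding k nm by (rule caseC) (use n nm j1 in auto)
  qed
qed


end
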